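(* Let $r$ be a positive integer with binary bit length $\ell(r)$, and let $A$ and $B$ be real symmetric positive semidefinite matrices with $\|A\|,\|B\|\leq1$ such that $I-A\approx_{\epsilon}I-B$ and $I-B\approx_{\epsilon}I-A$, where $0\le\epsilon\leq1/(2\ell(r))$. Then $I-A^r\approx_{2\epsilon\ell(r)}I-B^r$.
   Context: $\|\cdot\|$ is the spectral norm. For real symmetric $X,Y$ and $\epsilon\ge0$, $X\approx_\epsilon Y$ means $(1-\epsilon)v^TYv\le v^TXv\le(1+\epsilon)v^TYv$ for all vectors $v$. *)

theory Defs
  imports "HOL-Analysis.Analysis"
begin

fun matpow :: "real^'n^'n \<Rightarrow> nat \<Rightarrow> real^'n^'n" where
  "matpow A 0 = mat 1"
| "matpow A (Suc k) = A ** matpow A k"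

fun bit_length :: "nat \<Rightarrow> nat" where
  "bit_length n = (if n = 0 then 0 else 1 + bit_length (n div 2))"

declare bit_length.simps[simp del]

definition spec_norm :: "real^'n^'n \<Rightarrow> real" where
  "spec_norm A = onorm (\<lambda>x. A *v x)"

definition symmetric_mat :: "real^'n^'n \<Rightarrow> bool" where
  "symmetric_mat A \<longleftrightarrow> transpose A = A"

definition psd :: "real^'n^'n \<Rightarrow> bool" where
  "psd A \<longleftrightarrow> symmetric_mat A \<and> (\<forall>v. 0 \<le> v \<bullet> (A *v v))"

definition approx_eps :: "real^'n^'n \<Rightarrow> real \<Rightarrow> real^'n^'n \<Rightarrow> bool" where
  "approx_eps X eps Y \<longleftrightarrow>
     (\<forall>v. (1 - eps) * (v \<bullet> (Y *v v)) \<le> v \<bullet> (X *v v) \<and>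
          v \<bullet> (X *v v) \<le> (1 + eps) * (v \<bullet> (Y *v v)))"

end

theory Submission
  imports Defs
begin

lemma sym_dot:
  fixes A :: "real^'n^'n"
  assumes "transpose A = A"
  shows "x \<bullet> (A *v y) = (A *v x) \<bullet> y"
  by (metis assms dot_lmul_matrix transpose_matrix_vector)

lemma matpow_comm: "matpow A k ** A = A ** matpow A k"
proof (induction k)
  case 0 then show ?case by simp
next
  case (Suc k) then show ?case by (metis matpow.simps(2) matrix_mul_assoc)
qed

lemma matpow_Suc_vec: "matpow A (Suc k) *v x = A *v (matpow A k *v x)"
  by (simp add: matrix_vector_mul_assoc)

declare matpow.simps(2)[simp del]
declare matpow_Suc_vec[simp]

lemma matpow_add: "matpow A (m + n) *v x = matpow A m *v (matpow A n *v x)"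
  by (induction m arbitrary: x) simp_all

lemma matpow_suc': "matpow A (Suc k) *v x = matpow A k *v (A *v x)"
  by (simp add: matpow.simps(2) matpow_comm[symmetric] matrix_vector_mul_assoc)

lemma matpow_sym:
  fixes A :: "real^'n^'n"
  assumes "transpose A = A"
  shows "x \<bullet> (matpow A k *v y) = (matpow A k *v x) \<bullet> y"
proof (induction k arbitrary: x)
  case 0 then show ?case by simp
next
  case (Suc k)
  have "x \<bullet> (matpow A (Suc k) *v y) = x \<bullet> (A *v (matpow A k *v y))"
    by simp
  also have "\<dots> = (A *v x) \<bullet> (matpow A k *v y)" using sym_dot[OF assms] by simp
  also have "\<dots> = (matpow A k *v (A *v x)) \<bullet> y" using Suc by simp
  also have "\<dots> = (matpow A (Suc k) *v x) \<bullet> y" by (simp only: matpow_suc')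
  finally show ?case .
qed

lemma c_split:
  fixes A :: "real^'n^'n"
  assumes "transpose A = A"
  shows "(matpow A i *v v) \<bullet> (matpow A j *v v) = v \<bullet> (matpow A (i + j) *v v)"
  by (simp add: matpow_sym[OF assms, symmetric] matpow_add)

lemma c_shift:
  fixes A :: "real^'n^'n"
  assumes "transpose A = A"
  shows "v \<bullet> (matpow A (i + i + t) *v v) = (matpow A i *v v) \<bullet> (matpow A t *v (matpow A i *v v))"
proof -
  have "v \<bullet> (matpow A (i + i + t) *v v) = v \<bullet> (matpow A (i + (t + i)) *v v)"
    by (simp add: ac_simps)
  also have "\<dots> = (matpow A i *v v) \<bullet> (matpow A (t + i) *v v)"
    using c_split[OF assms] by simp
  also have "\<dots> = (matpow A i *v v) \<bullet> (matpow A t *v (matpow A i *v v))"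
    by (simp add: matpow_add)
  finally show ?thesis .
qed

lemma second_diff:
  fixes A :: "real^'n^'n"
  assumes "psd A"
  shows "v \<bullet> (matpow A j *v v) - 2 * (v \<bullet> (matpow A (Suc j) *v v)) + v \<bullet> (matpow A (Suc (Suc j)) *v v) \<ge> 0"
proof -
  have sym: "transpose A = A" using assms by (simp add: psd_def symmetric_mat_def)
  have ps: "\<And>w. 0 \<le> w \<bullet> (A *v w)" using assms by (simp add: psd_def)
  obtain i where "j = i + i \<or> j = i + i + 1"
  proof -
    have "j = j div 2 + j div 2 \<or> j = j div 2 + j div 2 + 1" by presburger
    then show ?thesis using that by blast
  qed
  then show ?thesis
  proof
    assume j: "j = i + i"
    define u where "u = matpow A i *v v"
    have e0: "v \<bullet> (matpow A j *v v) = u \<bullet> u"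
      using c_shift[OF sym, of v i 0] j by (simp add: u_def)
    have e1: "v \<bullet> (matpow A (Suc j) *v v) = u \<bullet> (A *v u)"
      using c_shift[OF sym, of v i 1] j by (simp add: u_def)
    have e2: "v \<bullet> (matpow A (Suc (Suc j)) *v v) = (A *v u) \<bullet> (A *v u)"
      using c_shift[OF sym, of v i 2] j sym_dot[OF sym, of u "A *v u"]
      by (simp add: u_def numeral_2_eq_2)
    have "0 \<le> (u - A *v u) \<bullet> (u - A *v u)" by simp
    also have "\<dots> = u \<bullet> u - 2 * (u \<bullet> (A *v u)) + (A *v u) \<bullet> (A *v u)"
      by (simp add: inner_diff_left inner_diff_right inner_commute)
    finally show ?thesis using e0 e1 e2 by simp
  next
    assume j: "j = i + i + 1"
    define u where "u = matpow A i *v v"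
    have e1: "v \<bullet> (matpow A j *v v) = u \<bullet> (A *v u)"
      using c_shift[OF sym, of v i 1] j by (simp add: u_def)
    have e2: "v \<bullet> (matpow A (Suc j) *v v) = (A *v u) \<bullet> (A *v u)"
      using c_shift[OF sym, of v i 2] j sym_dot[OF sym, of u "A *v u"]
      by (simp add: u_def numeral_2_eq_2)
    have e3: "v \<bullet> (matpow A (Suc (Suc j)) *v v) = (A *v u) \<bullet> (A *v (A *v u))"
      using c_shift[OF sym, of v i 3] j sym_dot[OF sym, of u "A *v (A *v u)"]
      by (simp add: u_def numeral_3_eq_3)
    have s1: "u \<bullet> (A *v (A *v u)) = (A *v u) \<bullet> (A *v u)" using sym_dot[OF sym] by simp
    have s2: "(A *v u) \<bullet> (A *v u) = (A *v u) \<bullet> (A *v u)" by simp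
    have "0 \<le> (u - A *v u) \<bullet> (A *v (u - A *v u))" by (rule ps)
    also have "\<dots> = u \<bullet> (A *v u) - u \<bullet> (A *v (A *v u)) - (A *v u) \<bullet> (A *v u) + (A *v u) \<bullet> (A *v (A *v u))"
      by (simp add: inner_diff_left inner_diff_right matrix_vector_mult_diff_distrib)
    finally show ?thesis using e1 e2 e3 s1 by simp
  qed
qed

lemma transpose_diff': "transpose (A - B :: real^'n^'n) = transpose A - transpose B"
  by (simp add: transpose_def vec_eq_iff)

lemma tele:
  fixes A B :: "real^'n^'n"
  shows "matpow A r *v v - matpow B r *v v =
    (\<Sum>k<r. matpow A k *v ((A - B) *v (matpow B (r - 1 - k) *v v)))"
proof (induction r)
  case 0 then show ?case by simp
next
  case (Suc r)
  have "matpow A (Suc r) *v v - matpow B (Suc r) *v v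
      = A *v (matpow A r *v v - matpow B r *v v) + (A - B) *v (matpow B r *v v)"
    by (simp add: matrix_vector_mult_diff_distrib matrix_vector_mult_diff_rdistrib)
  also have "\<dots> = (\<Sum>k<r. A *v (matpow A k *v ((A - B) *v (matpow B (r - 1 - k) *v v))))
      + (A - B) *v (matpow B r *v v)"
    using Suc by (simp add: vec.sum)
  also have "\<dots> = (\<Sum>k<Suc r. matpow A k *v ((A - B) *v (matpow B (Suc r - 1 - k) *v v)))"
    by (subst sum.lessThan_Suc_shift) simp
  finally show ?case .
qed

lemma bil:
  fixes E M :: "real^'n^'n"
  assumes sym: "transpose E = E"
    and h: "\<And>z. \<bar>z \<bullet> (E *v z)\<bar> \<le> e * (z \<bullet> (M *v z))"
  shows "\<bar>x \<bullet> (E *v y)\<bar> \<le> e / 2 * (x \<bullet> (M *v x) + y \<bullet> (M *v y))"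
proof -
  have s: "y \<bullet> (E *v x) = x \<bullet> (E *v y)"
    using sym_dot[OF sym, of y x] by (simp add: inner_commute)
  have p: "4 * (x \<bullet> (E *v y)) = (x+y) \<bullet> (E *v (x+y)) - (x-y) \<bullet> (E *v (x-y))"
    using s by (simp add: matrix_vector_right_distrib matrix_vector_mult_diff_distrib
        inner_add_left inner_add_right inner_diff_left inner_diff_right)
  have q: "(x+y) \<bullet> (M *v (x+y)) + (x-y) \<bullet> (M *v (x-y)) = 2*(x \<bullet> (M *v x) + y \<bullet> (M *v y))"
    by (simp add: matrix_vector_right_distrib matrix_vector_mult_diff_distrib
        inner_add_left inner_add_right inner_diff_left inner_diff_right)
  have "\<bar>4 * (x \<bullet> (E *v y))\<bar> \<le> e * ((x+y) \<bullet> (M *v (x+y))) + e * ((x-y) \<bullet> (M *v (x-y)))"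
    using p h[of "x+y"] h[of "x-y"] by linarith
  also have "\<dots> = 2 * e * (x \<bullet> (M *v x) + y \<bullet> (M *v y))"
    using q by (simp add: algebra_simps)
  finally show ?thesis by simp
qed

lemma norm_pow_le:
  fixes B :: "real^'n^'n"
  assumes "spec_norm B \<le> 1"
  shows "norm (matpow B k *v v) \<le> norm v"
proof (induction k)
  case 0 then show ?case by simp
next
  case (Suc k)
  have "norm (B *v (matpow B k *v v)) \<le> onorm ((*v) B) * norm (matpow B k *v v)"
    by (rule onorm[OF matrix_vector_mul_bounded_linear])
  also have "\<dots> \<le> 1 * norm (matpow B k *v v)"
    using assms by (intro mult_right_mono) (auto simp: spec_norm_def)
  finally show ?case using Suc by simp
qed

lemma pow_form_le:
  fixes B :: "real^'n^'n"
  assumes "spec_norm B \<le> 1"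
  shows "v \<bullet> (matpow B k *v v) \<le> v \<bullet> v"
proof -
  have "v \<bullet> (matpow B k *v v) \<le> norm v * norm (matpow B k *v v)"
    by (rule norm_cauchy_schwarz)
  also have "\<dots> \<le> norm v * norm v"
    using norm_pow_le[OF assms] by (simp add: mult_left_mono)
  finally show ?thesis by (simp add: power2_norm_eq_inner[symmetric] power2_eq_square)
qed

lemma half_sum_le:
  fixes A :: "real^'n^'n"
  assumes "psd A"
  shows "(\<Sum>k<r. v \<bullet> (matpow A (2*k) *v v) - v \<bullet> (matpow A (Suc (2*k)) *v v))
     \<le> v \<bullet> v - v \<bullet> (matpow A r *v v)"
proof -
  define d where "d j = v \<bullet> (matpow A j *v v) - v \<bullet> (matpow A (Suc j) *v v)" for j
  have dec: "d (Suc j) \<le> d j" for j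
    using second_diff[OF assms, of v j] by (simp add: d_def)
  have "(\<Sum>k<r. d (2*k)) \<le> (\<Sum>k<r. d k)"
    by (rule sum_mono) (rule lift_Suc_antimono_le[of d], rule dec, simp)
  also have "(\<Sum>k<r. d k) = v \<bullet> v - v \<bullet> (matpow A r *v v)"
    using sum_lessThan_telescope[of "\<lambda>j. - (v \<bullet> (matpow A j *v v))" r]
    by (simp add: d_def)
  finally show ?thesis by (simp add: d_def)
qed

lemma final_alg:
  fixes a b e L :: real
  assumes "0 \<le> b" "0 \<le> e" "e \<le> 1/2" "1 \<le> L" "e * L \<le> 1/2"
    and "\<bar>a - b\<bar> \<le> e / 2 * ((1 + e) * a + b)"
  shows "(1 - 2 * e * L) * b \<le> a \<and> a \<le> (1 + 2 * e * L) * b"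
proof -
  have ee: "e*e \<le> e*(1/2)" by (rule mult_left_mono[OF assms(3) assms(2)])
  have k: "0 < 1 - e/2 - e*e/2" using ee assms(3) by linarith
  have h1: "a - b \<le> e / 2 * ((1 + e) * a + b)" "b - a \<le> e / 2 * ((1 + e) * a + b)"
    using assms(6) abs_le_D1[OF assms(6)] abs_le_D2[OF assms(6)] by simp_all
  have id1: "a * (1 - e/2 - e*e/2) - (1 + e/2) * b = (a - b) - e / 2 * ((1 + e) * a + b)"
    by (simp add: algebra_simps)
  have id2: "(1 - e/2) * b - a * (1 + e/2 + e*e/2) = (b - a) - e / 2 * ((1 + e) * a + b)"
    by (simp add: algebra_simps)
  have up1: "a * (1 - e/2 - e*e/2) \<le> (1 + e/2) * b"
    using h1(1) id1 by linarith
  have "(1 + e/2) * b \<le> (1 + 2*e) * (1 - e/2 - e*e/2) * b"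
  proof -
    have "(1 + 2*e) * (1 - e/2 - e*e/2) - (1 + e/2) = e * (1 - 3*e/2 - e*e)"
      by (simp add: algebra_simps)
    moreover have "0 \<le> e * (1 - 3*e/2 - e*e)" using assms(2,3) ee by (intro mult_nonneg_nonneg) linarith+
    ultimately have "1 + e/2 \<le> (1 + 2*e) * (1 - e/2 - e*e/2)" by linarith
    then show ?thesis using assms(1) by (rule mult_right_mono)
  qed
  moreover have "(1 + 2*e) * (1 - e/2 - e*e/2) * b = ((1 + 2*e) * b) * (1 - e/2 - e*e/2)"
    by (simp add: algebra_simps)
  ultimately have "a * (1 - e/2 - e*e/2) \<le> ((1 + 2*e) * b) * (1 - e/2 - e*e/2)"
    using up1 by linarith
  then have up: "a \<le> (1 + 2*e) * b" using k by simp
  have lo1: "(1 - e/2) * b \<le> a * (1 + e/2 + e*e/2)"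
    using h1(2) id2 by linarith
  have "(1 - 2*e) * (1 + e/2 + e*e/2) * b \<le> (1 - e/2) * b"
  proof -
    have "(1 - e/2) - (1 - 2*e) * (1 + e/2 + e*e/2) = e + e*e/2 + e*e*e"
      by (simp add: field_simps)
    moreover have "0 \<le> e + e*e/2 + e*e*e" using assms(2) by simp
    ultimately have "(1 - 2*e) * (1 + e/2 + e*e/2) \<le> 1 - e/2" by linarith
    then show ?thesis using assms(1) by (rule mult_right_mono)
  qed
  moreover have "(1 - 2*e) * (1 + e/2 + e*e/2) * b = ((1 - 2*e) * b) * (1 + e/2 + e*e/2)"
    by (simp add: field_simps)
  ultimately have "((1 - 2*e) * b) * (1 + e/2 + e*e/2) \<le> a * (1 + e/2 + e*e/2)"
    using lo1 by linarith
  moreover have "0 < 1 + e/2 + e*e/2" using assms(2) by (simp add: add_pos_nonneg)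
  ultimately have lo: "(1 - 2*e) * b \<le> a" by simp
  have "e \<le> e * L" using assms(2,4) by (simp add: mult_le_cancel_left1)
  then have "(1 - 2 * e * L) * b \<le> (1 - 2*e) * b" "(1 + 2*e) * b \<le> (1 + 2 * e * L) * b"
    using assms(1) by (simp_all add: mult_right_mono)
  with up lo show ?thesis by linarith
qed

theorem mainTheorem9:
  fixes A B :: "real^'n^'n" and r :: nat and \<epsilon> :: real
  assumes "r > 0"
    and "psd A" and "psd B"
    and "spec_norm A \<le> 1" and "spec_norm B \<le> 1"
    and "approx_eps (mat 1 - A) \<epsilon> (mat 1 - B)"
    and "approx_eps (mat 1 - B) \<epsilon> (mat 1 - A)"
    and "0 \<le> \<epsilon>" and "\<epsilon> \<le> 1 / (2 * real (bit_length r))"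
  shows "approx_eps (mat 1 - matpow A r) (2 * \<epsilon> * real (bit_length r)) (mat 1 - matpow B r)"
proof -
  have symA: "transpose A = A" using assms(2) by (simp add: psd_def symmetric_mat_def)
  have symB: "transpose B = B" using assms(3) by (simp add: psd_def symmetric_mat_def)
  define E where "E = A - B"
  define M where "M = mat 1 - B"
  have symE: "transpose E = E" by (simp add: E_def transpose_diff' symA symB)
  have qf: "\<And>(X::real^'n^'n) (z::real^'n). z \<bullet> ((mat 1 - X) *v z) = z \<bullet> z - z \<bullet> (X *v z)"
    by (simp add: matrix_vector_mult_diff_rdistrib inner_diff_right)
  have hE: "\<bar>z \<bullet> (E *v z)\<bar> \<le> \<epsilon> * (z \<bullet> (M *v z))" for z
  proof -
    have h: "(1-\<epsilon>) * (z \<bullet> z - z \<bullet> (B *v z)) \<le> z \<bullet> z - z \<bullet> (A *v z)"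
      "z \<bullet> z - z \<bullet> (A *v z) \<le> (1+\<epsilon>) * (z \<bullet> z - z \<bullet> (B *v z))"
      using assms(6) unfolding approx_eps_def qf by auto
    have "z \<bullet> (E *v z) = z \<bullet> (A *v z) - z \<bullet> (B *v z)"
      by (simp add: E_def matrix_vector_mult_diff_rdistrib inner_diff_right)
    moreover have "z \<bullet> (M *v z) = z \<bullet> z - z \<bullet> (B *v z)" by (simp add: M_def qf)
    moreover have "(1-\<epsilon>) * (z \<bullet> z - z \<bullet> (B *v z)) = (z \<bullet> z - z \<bullet> (B *v z)) - \<epsilon> * (z \<bullet> z - z \<bullet> (B *v z))"
      "(1+\<epsilon>) * (z \<bullet> z - z \<bullet> (B *v z)) = (z \<bullet> z - z \<bullet> (B *v z)) + \<epsilon> * (z \<bullet> z - z \<bullet> (B *v z))"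
      by (simp_all add: algebra_simps)
    ultimately show ?thesis using h by (simp add: abs_le_iff)
  qed
  have hBA: "z \<bullet> (M *v z) \<le> (1+\<epsilon>) * (z \<bullet> z - z \<bullet> (A *v z))" for z
    using assms(7) unfolding approx_eps_def qf M_def by auto
  have L1: "1 \<le> bit_length r" using assms(1) by (subst bit_length.simps) simp
  define L where "L = real (bit_length r)"
  have L1': "1 \<le> L" using L1 by (simp add: L_def)
  have eL: "\<epsilon> * L \<le> 1/2"
  proof -
    have "\<epsilon> * (2 * L) \<le> 1" using assms(9) L1' by (simp add: L_def field_simps)
    then show ?thesis by simp
  qed
  have ehalf: "\<epsilon> \<le> 1/2"
  proof -
    have "\<epsilon> \<le> \<epsilon> * L" using assms(8) L1' by (simp add: mult_le_cancel_left1)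
    then show ?thesis using eL by linarith
  qed
  show ?thesis unfolding approx_eps_def L_def[symmetric]
  proof
    fix v :: "real^'n"
    define cA where "cA j = v \<bullet> (matpow A j *v v)" for j
    define cB where "cB j = v \<bullet> (matpow B j *v v)" for j
    define x where "x k = matpow A k *v v" for k
    define y where "y k = matpow B (r - 1 - k) *v v" for k
    have alpha: "v \<bullet> ((mat 1 - matpow A r) *v v) = v \<bullet> v - cA r" by (simp add: qf cA_def)
    have beta: "v \<bullet> ((mat 1 - matpow B r) *v v) = v \<bullet> v - cB r" by (simp add: qf cB_def)
    have bnn: "0 \<le> v \<bullet> v - cB r" using pow_form_le[OF assms(5)] by (simp add: cB_def)
    have diff: "cA r - cB r = (\<Sum>k<r. x k \<bullet> (E *v y k))"
    proof -
      have "cA r - cB r = v \<bullet> (matpow A r *v v - matpow B r *v v)"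
        by (simp add: cA_def cB_def inner_diff_right)
      also have "\<dots> = (\<Sum>k<r. v \<bullet> (matpow A k *v (E *v y k)))"
        by (simp add: tele inner_sum_right E_def y_def)
      also have "\<dots> = (\<Sum>k<r. x k \<bullet> (E *v y k))"
        by (simp add: matpow_sym[OF symA] x_def)
      finally show ?thesis .
    qed
    have xb: "x k \<bullet> (M *v x k) \<le> (1+\<epsilon>) * (cA (2*k) - cA (Suc (2*k)))" for k
    proof -
      have "cA (2*k) = x k \<bullet> x k" using c_shift[OF symA, of v k 0]
        by (simp add: cA_def x_def mult_2)
      moreover have "cA (Suc (2*k)) = x k \<bullet> (A *v x k)" using c_shift[OF symA, of v k 1]
        by (simp add: cA_def x_def mult_2)
      ultimately show ?thesis using hBA[of "x k"] by simp
    qed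
    have yb: "y k \<bullet> (M *v y k) = cB (2*(r - 1 - k)) - cB (Suc (2*(r - 1 - k)))" for k
    proof -
      have "cB (2*(r-1-k)) = y k \<bullet> y k" using c_shift[OF symB, of v "r-1-k" 0]
        by (simp add: cB_def y_def mult_2)
      moreover have "cB (Suc (2*(r-1-k))) = y k \<bullet> (B *v y k)" using c_shift[OF symB, of v "r-1-k" 1]
        by (simp add: cB_def y_def mult_2)
      ultimately show ?thesis by (simp add: M_def qf)
    qed
    have SA: "(\<Sum>k<r. cA (2*k) - cA (Suc (2*k))) \<le> v \<bullet> v - cA r"
      using half_sum_le[OF assms(2), where r=r and v=v] by (simp add: cA_def)
    have SB: "(\<Sum>k<r. cB (2*(r - 1 - k)) - cB (Suc (2*(r - 1 - k)))) \<le> v \<bullet> v - cB r"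
    proof -
      have "(\<Sum>k<r. cB (2*(r - 1 - k)) - cB (Suc (2*(r - 1 - k))))
          = (\<Sum>k<r. cB (2*k) - cB (Suc (2*k)))"
        using sum.nat_diff_reindex[of "\<lambda>k. cB (2*k) - cB (Suc (2*k))" r] by simp
      also have "\<dots> \<le> v \<bullet> v - cB r"
        using half_sum_le[OF assms(3), where r=r and v=v] by (simp add: cB_def)
      finally show ?thesis .
    qed
    have "\<bar>cA r - cB r\<bar> \<le> (\<Sum>k<r. \<bar>x k \<bullet> (E *v y k)\<bar>)"
      unfolding diff by (rule sum_abs)
    also have "\<dots> \<le> (\<Sum>k<r. \<epsilon> / 2 * (x k \<bullet> (M *v x k) + y k \<bullet> (M *v y k)))"
      by (rule sum_mono) (rule bil[OF symE hE])
    also have "\<dots> = \<epsilon> / 2 * ((\<Sum>k<r. x k \<bullet> (M *v x k)) + (\<Sum>k<r. y k \<bullet> (M *v y k)))"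
      by (simp only: sum.distrib[symmetric] sum_distrib_left)
    also have "\<dots> \<le> \<epsilon> / 2 * ((1+\<epsilon>) * (v \<bullet> v - cA r) + (v \<bullet> v - cB r))"
    proof (rule mult_left_mono)
      have "(\<Sum>k<r. x k \<bullet> (M *v x k)) \<le> (\<Sum>k<r. (1+\<epsilon>) * (cA (2*k) - cA (Suc (2*k))))"
        by (rule sum_mono) (rule xb)
      also have "\<dots> = (1+\<epsilon>) * (\<Sum>k<r. cA (2*k) - cA (Suc (2*k)))"
        by (simp add: sum_distrib_left)
      also have "\<dots> \<le> (1+\<epsilon>) * (v \<bullet> v - cA r)"
        using SA assms(8) by (intro mult_left_mono) auto
      finally have 1: "(\<Sum>k<r. x k \<bullet> (M *v x k)) \<le> (1+\<epsilon>) * (v \<bullet> v - cA r)" .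
      have 2: "(\<Sum>k<r. y k \<bullet> (M *v y k)) \<le> v \<bullet> v - cB r"
        using SB by (simp add: yb)
      show "(\<Sum>k<r. x k \<bullet> (M *v x k)) + (\<Sum>k<r. y k \<bullet> (M *v y k))
          \<le> (1+\<epsilon>) * (v \<bullet> v - cA r) + (v \<bullet> v - cB r)" using 1 2 by linarith
      show "0 \<le> \<epsilon> / 2" using assms(8) by simp
    qed
    finally have ab: "\<bar>(v \<bullet> v - cA r) - (v \<bullet> v - cB r)\<bar>
        \<le> \<epsilon> / 2 * ((1+\<epsilon>) * (v \<bullet> v - cA r) + (v \<bullet> v - cB r))"
      by (simp add: abs_minus_commute)
    show "(1 - 2 * \<epsilon> * L) * (v \<bullet> ((mat 1 - matpow B r) *v v)) \<le> v \<bullet> ((mat 1 - matpow A r) *v v) \<and>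
          v \<bullet> ((mat 1 - matpow A r) *v v) \<le> (1 + 2 * \<epsilon> * L) * (v \<bullet> ((mat 1 - matpow B r) *v v))"
      unfolding alpha beta
      by (rule final_alg[OF bnn assms(8) ehalf L1' eL ab])
  qed
qed

end
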